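(* Let $\mathcal A=(Q,\Sigma,\delta,\rho)$ be a connected bireversible Mealy automaton whose labeled orbit tree $\mathfrak t(\mathcal A)$ has no active self-liftable branch, and let $\mathfrak j$ be a jungle tree with trunk of length $n$. Then for every $i\in\{1,\dots,n\}$, every $\sim$-class $\gamma$ of stems and every $\mathbf u\in Q^{i-1}$ which is a prefix of some stem in $\gamma$, the set $\{q\in Q : \mathbf uq \text{ is a prefix of some stem in } \gamma\}$ has at least $2$ elements; that is, $\mathcal S_{\mathrm{eq}}(i)\ge 2$.
   Context: Mealy automata. A Mealy automaton is $\mathcal A=(Q,\Sigma,\delta,\rho)$ with $Q,\Sigma$ finite non-empty sets, $\delta=(\delta_i\colon Q\to Q)_{i\in\Sigma}$, $\rho=(\rho_x\colon\Sigma\to\Sigma)_{x\in Q}$; transitions $x\xrightarrow{i\mid\rho_x(i)}\delta_i(x)$. Invertible: each $\rho_x$ a permutation of $\Sigma$; reversible: each $\delta_i$ a permutation of $Q$; bireversible: invertible, reversible, and for each $j\in\Sigma$ the map $x\mapsto\delta_{\rho_x^{-1}(j)}(x)$ is a permutation of $Q$. Connected: the directed graph on $Q$ with edges $x\to\delta_i(x)$ is connected. Extensions: $\rho_x(i\mathbf s)=\rho_x(i)\rho_{\delta_i(x)}(\mathbf s)$; $\rho_{x_1\cdots x_m}=\rho_{x_m}\circ\cdots\circ\rho_{x_1}$; $\delta_i(x\mathbf u)=\delta_i(x)\delta_{\rho_x(i)}(\mathbf u)$ on $Q^*$, $\delta_{i_1\cdots i_m}=\delta_{i_m}\circ\cdots\circ\delta_{i_1}$.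 The connected components of $\mathcal A^n$ (stateset $Q^n$, transitions $\mathbf u\xrightarrow{i\mid\rho_{\mathbf u}(i)}\delta_i(\mathbf u)$) are, for reversible $\mathcal A$, the orbits of $Q^n$ under the maps $\delta_{\mathbf s}$. Orbit tree $\mathfrak t(\mathcal A)$: vertices at level $n\ge0$ are the connected components of $\mathcal A^n$; an edge from the component of $\mathbf u\in Q^n$ to that of $\mathbf ux$ for all $\mathbf u,x$; edge $C\to D$ labeled $\#D/\#C$. $\top,\bot$ = first/last vertex of a downward path; level of an edge/path = level of its top vertex. A word of $Q^*\cup Q^\omega$ represents the initial path through the components of its prefixes. Edge $e$ is liftable to $f$ if every word of $\bot(e)$ has a suffix in $\bot(f)$; paths are liftable if corresponding edges are. $f$ is a legitimate child of $e$ if $\top(f)=\bot(e)$ and $f$ is liftable to $e$. A path/subtree $\mathfrak s$ is $k$-self-liftable if for all $i\ge0$ every path in $\mathfrak s$ starting at level $i+k$ is liftable to a path in $\mathfrak s$ starting at level $i$; self-liftable if $k$-self-liftable for some $k>0$. A branch (infinite initial path) is active if its labels are not eventually all $1$. Jungle trees: for a finite 1-self-liftable initial path $\mathbf e$ of length $n$ whose last edge has at least two legitimate children, all labeled $1$, $\mathfrak j(\mathbf e)$ consists of $\mathbf e$ plus all edges descending from $\bot(\mathbf e)$ that are liftable to the last edge of $\mathbf e$. Stems: the words of $\bot(\mathbf e)\subseteq Q^n$. A $\mathfrak j$-word is a word representing an initial path of $\mathfrak j$. For stems $\mathbf u,\mathbf v$: $\mathbf u\sim\mathbf v$ iff there is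 $\mathbf s\in Q^*$ such that $\mathbf{usv}$ is a $\mathfrak j$-word and $\rho_{\mathbf{us}}$ is the identity of $\Sigma^*$; $\sim$ is an equivalence relation. $\mathcal S_{\mathrm{eq}}(i)$ denotes the cardinality of $\{q\in Q:\mathbf uq$ is a prefix of a stem in $\gamma\}$ for $\mathbf u\in Q^{i-1}$ a prefix of a stem in a $\sim$-class $\gamma$; this number does not depend on the choice of $\mathbf u$ and $\gamma$. *)

theory Defs
  imports Complex_Main "HOL-Library.Sublist"
begin

text \<open>Mealy automaton with state set Q = UNIV :: 'q (finite type) and alphabet
  Sigma = UNIV :: 'a (finite type). delta i x is the target state, rho x i the output.\<close>

definition invertible :: "('a \<Rightarrow> 'q \<Rightarrow> 'q) \<Rightarrow> ('q \<Rightarrow> 'a \<Rightarrow> 'a) \<Rightarrow> bool" where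
  "invertible delta rho \<longleftrightarrow> (\<forall>x. bij (rho x))"

definition reversible :: "('a \<Rightarrow> 'q \<Rightarrow> 'q) \<Rightarrow> ('q \<Rightarrow> 'a \<Rightarrow> 'a) \<Rightarrow> bool" where
  "reversible delta rho \<longleftrightarrow> (\<forall>i. bij (delta i))"

definition bireversible :: "('a \<Rightarrow> 'q \<Rightarrow> 'q) \<Rightarrow> ('q \<Rightarrow> 'a \<Rightarrow> 'a) \<Rightarrow> bool" where
  "bireversible delta rho \<longleftrightarrow> invertible delta rho \<and> reversible delta rho \<and>
     (\<forall>j. bij (\<lambda>x. delta (inv (rho x) j) x))"

definition connected_aut :: "('a \<Rightarrow> 'q \<Rightarrow> 'q) \<Rightarrow> bool" where
  "connected_aut delta \<longleftrightarrow>
     (let E = {(x, delta i x) | x i. True} in \<forall>x y. (x, y) \<in> (E \<union> E\<inverse>)\<^sup>*)"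

fun rho_w :: "('a \<Rightarrow> 'q \<Rightarrow> 'q) \<Rightarrow> ('q \<Rightarrow> 'a \<Rightarrow> 'a) \<Rightarrow> 'q \<Rightarrow> 'a list \<Rightarrow> 'a list" where
  "rho_w delta rho x [] = []"
| "rho_w delta rho x (i # s) = rho x i # rho_w delta rho (delta i x) s"

fun rho_ww :: "('a \<Rightarrow> 'q \<Rightarrow> 'q) \<Rightarrow> ('q \<Rightarrow> 'a \<Rightarrow> 'a) \<Rightarrow> 'q list \<Rightarrow> 'a list \<Rightarrow> 'a list" where
  "rho_ww delta rho [] s = s"
| "rho_ww delta rho (x # u) s = rho_ww delta rho u (rho_w delta rho x s)"

fun delta_q :: "('a \<Rightarrow> 'q \<Rightarrow> 'q) \<Rightarrow> ('q \<Rightarrow> 'a \<Rightarrow> 'a) \<Rightarrow> 'a \<Rightarrow> 'q list \<Rightarrow> 'q list" where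
  "delta_q delta rho i [] = []"
| "delta_q delta rho i (x # u) = delta i x # delta_q delta rho (rho x i) u"

text \<open>Connected component of u in A^n (n = length u): the equivalence closure of
  the transition relation u -> delta_i(u) of A^n.\<close>
definition comp :: "('a \<Rightarrow> 'q \<Rightarrow> 'q) \<Rightarrow> ('q \<Rightarrow> 'a \<Rightarrow> 'a) \<Rightarrow> 'q list \<Rightarrow> 'q list set" where
  "comp delta rho u =
     (let E = {(w, delta_q delta rho i w) | w i. True} in {v. (u, v) \<in> (E \<union> E\<inverse>)\<^sup>*})"

definition tree_edges :: "('a \<Rightarrow> 'q \<Rightarrow> 'q) \<Rightarrow> ('q \<Rightarrow> 'a \<Rightarrow> 'a) \<Rightarrow> ('q list set \<times> 'q list set) set" where
  "tree_edges delta rho = {(comp delta rho u, comp delta rho (u @ [x])) | u x. True}"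

definition label :: "('q list set \<times> 'q list set) \<Rightarrow> rat" where
  "label e = of_nat (card (snd e)) / of_nat (card (fst e))"

definition vlev :: "'q list set \<Rightarrow> nat" where
  "vlev C = length (SOME u. u \<in> C)"

definition edge_liftable :: "('q list set \<times> 'q list set) \<Rightarrow> ('q list set \<times> 'q list set) \<Rightarrow> bool" where
  "edge_liftable e f \<longleftrightarrow> (\<forall>w\<in>snd e. \<exists>v\<in>snd f. suffix v w)"

definition is_path :: "('q list set \<times> 'q list set) set \<Rightarrow> nat \<Rightarrow> ('q list set \<times> 'q list set) list \<Rightarrow> bool" where
  "is_path S i p \<longleftrightarrow> p \<noteq> [] \<and> set p \<subseteq> S \<and> vlev (fst (hd p)) = i \<and>
     (\<forall>j. Suc j < length p \<longrightarrow> snd (p ! j) = fst (p ! Suc j))"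

definition path_liftable :: "('q list set \<times> 'q list set) list \<Rightarrow> ('q list set \<times> 'q list set) list \<Rightarrow> bool" where
  "path_liftable p q \<longleftrightarrow> length p = length q \<and> (\<forall>j<length p. edge_liftable (p ! j) (q ! j))"

definition self_liftable_k :: "('q list set \<times> 'q list set) set \<Rightarrow> nat \<Rightarrow> bool" where
  "self_liftable_k S k \<longleftrightarrow> (\<forall>i p. is_path S (i + k) p \<longrightarrow> (\<exists>q. is_path S i q \<and> path_liftable p q))"

definition self_liftable :: "('q list set \<times> 'q list set) set \<Rightarrow> bool" where
  "self_liftable S \<longleftrightarrow> (\<exists>k>0. self_liftable_k S k)"

definition is_branch :: "('a \<Rightarrow> 'q \<Rightarrow> 'q) \<Rightarrow> ('q \<Rightarrow> 'a \<Rightarrow> 'a) \<Rightarrow> (nat \<Rightarrow> 'q list set) \<Rightarrow> bool" where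
  "is_branch delta rho b \<longleftrightarrow> b 0 = comp delta rho [] \<and>
     (\<forall>j. (b j, b (Suc j)) \<in> tree_edges delta rho)"

definition branch_edges :: "(nat \<Rightarrow> 'q list set) \<Rightarrow> ('q list set \<times> 'q list set) set" where
  "branch_edges b = {(b j, b (Suc j)) | j. True}"

definition active_branch :: "(nat \<Rightarrow> 'q list set) \<Rightarrow> bool" where
  "active_branch b \<longleftrightarrow> \<not> (\<exists>N. \<forall>j\<ge>N. label (b j, b (Suc j)) = 1)"

definition is_initial_path :: "('a \<Rightarrow> 'q \<Rightarrow> 'q) \<Rightarrow> ('q \<Rightarrow> 'a \<Rightarrow> 'a) \<Rightarrow> ('q list set \<times> 'q list set) list \<Rightarrow> bool" where
  "is_initial_path delta rho es \<longleftrightarrow> es \<noteq> [] \<and> set es \<subseteq> tree_edges delta rho \<and>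
     fst (hd es) = comp delta rho [] \<and>
     (\<forall>j. Suc j < length es \<longrightarrow> snd (es ! j) = fst (es ! Suc j))"

definition legit_children :: "('a \<Rightarrow> 'q \<Rightarrow> 'q) \<Rightarrow> ('q \<Rightarrow> 'a \<Rightarrow> 'a) \<Rightarrow> ('q list set \<times> 'q list set) \<Rightarrow> ('q list set \<times> 'q list set) set" where
  "legit_children delta rho e = {f \<in> tree_edges delta rho. fst f = snd e \<and> edge_liftable f e}"

definition jungle_trunk :: "('a \<Rightarrow> 'q \<Rightarrow> 'q) \<Rightarrow> ('q \<Rightarrow> 'a \<Rightarrow> 'a) \<Rightarrow> ('q list set \<times> 'q list set) list \<Rightarrow> bool" where
  "jungle_trunk delta rho es \<longleftrightarrow> is_initial_path delta rho es \<and> self_liftable_k (set es) 1 \<and>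
     card (legit_children delta rho (last es)) \<ge> 2 \<and>
     (\<forall>f\<in>legit_children delta rho (last es). label f = 1)"

definition jungle :: "('a \<Rightarrow> 'q \<Rightarrow> 'q) \<Rightarrow> ('q \<Rightarrow> 'a \<Rightarrow> 'a) \<Rightarrow> ('q list set \<times> 'q list set) list \<Rightarrow> ('q list set \<times> 'q list set) set" where
  "jungle delta rho es = set es \<union>
     {f \<in> tree_edges delta rho. (snd (last es), fst f) \<in> (tree_edges delta rho)\<^sup>* \<and> edge_liftable f (last es)}"

definition stems :: "('q list set \<times> 'q list set) list \<Rightarrow> 'q list set" where
  "stems es = snd (last es)"

definition j_word :: "('a \<Rightarrow> 'q \<Rightarrow> 'q) \<Rightarrow> ('q \<Rightarrow> 'a \<Rightarrow> 'a) \<Rightarrow> ('q list set \<times> 'q list set) set \<Rightarrow> 'q list \<Rightarrow> bool" where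
  "j_word delta rho J w \<longleftrightarrow>
     (\<forall>k<length w. (comp delta rho (take k w), comp delta rho (take (Suc k) w)) \<in> J)"

definition stem_sim :: "('a \<Rightarrow> 'q \<Rightarrow> 'q) \<Rightarrow> ('q \<Rightarrow> 'a \<Rightarrow> 'a) \<Rightarrow> ('q list set \<times> 'q list set) list \<Rightarrow> 'q list \<Rightarrow> 'q list \<Rightarrow> bool" where
  "stem_sim delta rho es u v \<longleftrightarrow>
     (\<exists>s. j_word delta rho (jungle delta rho es) (u @ s @ v) \<and> (\<forall>t. rho_ww delta rho (u @ s) t = t))"

definition sim_classes :: "('a \<Rightarrow> 'q \<Rightarrow> 'q) \<Rightarrow> ('q \<Rightarrow> 'a \<Rightarrow> 'a) \<Rightarrow> ('q list set \<times> 'q list set) list \<Rightarrow> 'q list set set" where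
  "sim_classes delta rho es = {{v \<in> stems es. stem_sim delta rho es u v} | u. u \<in> stems es}"

end

theory Submission imports Defs begin

definition edgesR :: "('a \<Rightarrow> 'q \<Rightarrow> 'q) \<Rightarrow> ('q \<Rightarrow> 'a \<Rightarrow> 'a) \<Rightarrow> ('q list \<times> 'q list) set" where
  "edgesR delta rho = {(w, delta_q delta rho i w) | w i. True}"

lemma comp_alt: "comp delta rho u = {v. (u, v) \<in> (edgesR delta rho \<union> (edgesR delta rho)\<inverse>)\<^sup>*}"
  by (simp add: comp_def edgesR_def Let_def)

fun outl :: "('a \<Rightarrow> 'q \<Rightarrow> 'q) \<Rightarrow> ('q \<Rightarrow> 'a \<Rightarrow> 'a) \<Rightarrow> 'a \<Rightarrow> 'q list \<Rightarrow> 'a" where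
  "outl delta rho i [] = i"
| "outl delta rho i (x # u) = outl delta rho (rho x i) u"

lemma dq_len: "length (delta_q delta rho i u) = length u"
  by (induction u arbitrary: i) auto

lemma dq_app: "delta_q delta rho i (A @ B) = delta_q delta rho i A @ delta_q delta rho (outl delta rho i A) B"
  by (induction A arbitrary: i) auto

lemma comp_self: "u \<in> comp delta rho u"
  by (simp add: comp_alt)

lemma comp_len: "v \<in> comp delta rho u \<Longrightarrow> length v = length u"
  unfolding comp_alt
proof -
  assume "v \<in> {v. (u, v) \<in> (edgesR delta rho \<union> (edgesR delta rho)\<inverse>)\<^sup>*}"
  then have "(u, v) \<in> (edgesR delta rho \<union> (edgesR delta rho)\<inverse>)\<^sup>*" by simp
  then show ?thesis
    by (induction rule: rtrancl_induct) (auto simp: edgesR_def dq_len)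
qed

lemma comp_sym: "v \<in> comp delta rho u \<Longrightarrow> u \<in> comp delta rho v"
proof -
  let ?S = "edgesR delta rho \<union> (edgesR delta rho)\<inverse>"
  assume "v \<in> comp delta rho u"
  then have "(u, v) \<in> ?S\<^sup>*" by (simp add: comp_alt)
  then have "(v, u) \<in> (?S\<inverse>)\<^sup>*" by (rule rtrancl_converseI)
  moreover have "?S\<inverse> = ?S" by auto
  ultimately show ?thesis by (simp add: comp_alt)
qed

lemma comp_trans: "v \<in> comp delta rho u \<Longrightarrow> w \<in> comp delta rho v \<Longrightarrow> w \<in> comp delta rho u"
  unfolding comp_alt by (auto intro: rtrancl_trans)

lemma comp_eq: "v \<in> comp delta rho u \<Longrightarrow> comp delta rho v = comp delta rho u"
  by (meson comp_sym comp_trans subsetI subset_antisym)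

lemma comp_step: "delta_q delta rho i u \<in> comp delta rho u"
  unfolding comp_alt edgesR_def by (rule CollectI, rule r_into_rtrancl) blast

lemma comp_split:
  assumes "W \<in> comp delta rho (A @ B)"
  shows "\<exists>W0 S. W = W0 @ S \<and> length W0 = length A \<and> S \<in> comp delta rho B"
proof -
  let ?S = "edgesR delta rho \<union> (edgesR delta rho)\<inverse>"
  have "(A @ B, W) \<in> ?S\<^sup>*" using assms by (simp add: comp_alt)
  then show ?thesis
  proof (induction rule: rtrancl_induct)
    case base
    then show ?case using comp_self by blast
  next
    case (step y z)
    then obtain W0 S0 where y: "y = W0 @ S0" "length W0 = length A" "S0 \<in> comp delta rho B" by blast
    from step.hyps(2) show ?case
    proof
      assume "(y, z) \<in> edgesR delta rho"
      then obtain i where z: "z = delta_q delta rho i y" by (auto simp: edgesR_def)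
      have "z = delta_q delta rho i W0 @ delta_q delta rho (outl delta rho i W0) S0"
        using z y dq_app by metis
      moreover have "delta_q delta rho (outl delta rho i W0) S0 \<in> comp delta rho B"
        using comp_trans[OF y(3) comp_step] .
      ultimately show ?thesis using y(2) dq_len by metis
    next
      assume "(y, z) \<in> (edgesR delta rho)\<inverse>"
      then obtain i where z: "y = delta_q delta rho i z" by (auto simp: edgesR_def)
      define z0 where "z0 = take (length A) z"
      define z1 where "z1 = drop (length A) z"
      have zz: "z = z0 @ z1" by (simp add: z0_def z1_def)
      have lz: "length z = length y" using z dq_len by metis
      have lz0: "length z0 = length A" using lz y(1) y(2) by (simp add: z0_def)
      have "y = delta_q delta rho i z0 @ delta_q delta rho (outl delta rho i z0) z1"
        using z zz dq_app by metis
      then have "S0 = delta_q delta rho (outl delta rho i z0) z1"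
        using y(1) y(2) lz0 dq_len by (metis append_eq_append_conv)
      then have "S0 \<in> comp delta rho z1" using comp_step by metis
      then have "z1 \<in> comp delta rho S0" by (rule comp_sym)
      then have "z1 \<in> comp delta rho B" using comp_trans y(3) by metis
      then show ?thesis using zz lz0 by blast
    qed
  qed
qed

lemma comp_ext:
  assumes rev: "\<forall>j. bij (delta j)"
    and "u' \<in> comp delta rho u"
  shows "\<exists>c. u' @ [c] \<in> comp delta rho (u @ [x])"
proof -
  let ?S = "edgesR delta rho \<union> (edgesR delta rho)\<inverse>"
  have "(u, u') \<in> ?S\<^sup>*" using assms by (simp add: comp_alt)
  then show ?thesis
  proof (induction rule: rtrancl_induct)
    case base
    then show ?case using comp_self by blast
  next
    case (step y z)
    then obtain c where c: "y @ [c] \<in> comp delta rho (u @ [x])" by blast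
    from step.hyps(2) show ?case
    proof
      assume "(y, z) \<in> edgesR delta rho"
      then obtain i where z: "z = delta_q delta rho i y" by (auto simp: edgesR_def)
      have "delta_q delta rho i (y @ [c]) = z @ [delta (outl delta rho i y) c]"
        using z dq_app[of delta rho i y "[c]"] by simp
      then show ?thesis using comp_trans[OF c comp_step] by metis
    next
      assume "(y, z) \<in> (edgesR delta rho)\<inverse>"
      then obtain i where z: "y = delta_q delta rho i z" by (auto simp: edgesR_def)
      let ?j = "outl delta rho i z"
      define c' where "c' = inv (delta ?j) c"
      have "delta ?j c' = c" using rev unfolding c'_def by (meson bij_inv_eq_iff)
      then have "delta_q delta rho i (z @ [c']) = y @ [c]"
        using z dq_app[of delta rho i z "[c']"] by simp
      then have "y @ [c] \<in> comp delta rho (z @ [c'])" using comp_step by metis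
      then have "z @ [c'] \<in> comp delta rho (y @ [c])" by (rule comp_sym)
      then show ?thesis using comp_trans[OF c] by blast
    qed
  qed
qed

lemma tree_edge_len:
  assumes "e \<in> tree_edges delta rho" "\<forall>w\<in>fst e. length w = j"
  shows "\<forall>w\<in>snd e. length w = Suc j"
proof -
  obtain u x where e: "e = (comp delta rho u, comp delta rho (u @ [x]))"
    using assms(1) by (auto simp: tree_edges_def)
  have "length u = j" using assms(2) e comp_self by fastforce
  then show ?thesis using e comp_len by fastforce
qed

lemma levels:
  assumes "is_initial_path delta rho es" "j < length es"
  shows "(\<forall>w\<in>fst (es ! j). length w = j) \<and> (\<forall>w\<in>snd (es ! j). length w = Suc j)"
  using assms(2)
proof (induction j)
  case 0
  have ne: "es \<noteq> []" using assms(1) by (simp add: is_initial_path_def)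
  have "fst (es ! 0) = comp delta rho []"
    using assms(1) ne by (simp add: is_initial_path_def hd_conv_nth)
  then have f: "\<forall>w\<in>fst (es ! 0). length w = 0" using comp_len[of _ delta rho "[]"] by simp
  have "es ! 0 \<in> set es" using 0 by simp
  then have "es ! 0 \<in> tree_edges delta rho" using assms(1) unfolding is_initial_path_def by blast
  from tree_edge_len[OF this f] f show ?case by simp
next
  case (Suc j)
  have jl: "j < length es" using Suc.prems by simp
  have eq: "fst (es ! Suc j) = snd (es ! j)"
    using assms(1) Suc.prems unfolding is_initial_path_def by metis
  have f: "\<forall>w\<in>fst (es ! Suc j). length w = Suc j"
    using Suc.IH[OF jl] eq by simp
  have "es ! Suc j \<in> set es" using Suc.prems by simp
  then have "es ! Suc j \<in> tree_edges delta rho" using assms(1) unfolding is_initial_path_def by blast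
  from tree_edge_len[OF this f] f show ?case by simp
qed

lemma last_len:
  assumes "is_initial_path delta rho es" "w \<in> snd (last es)"
  shows "length w = length es"
proof -
  have ne: "es \<noteq> []" using assms(1) by (simp add: is_initial_path_def)
  have "last es = es ! (length es - 1)" using ne by (simp add: last_conv_nth)
  then show ?thesis using levels[OF assms(1), of "length es - 1"] assms(2) ne by auto
qed

lemma set_es_len:
  assumes "is_initial_path delta rho es" "e \<in> set es" "w \<in> fst e"
  shows "length w < length es"
proof -
  obtain j where "j < length es" "e = es ! j" using assms(2) by (metis in_set_conv_nth)
  then show ?thesis using levels[OF assms(1)] assms(3) by auto
qed

lemma last_comp:
  assumes "is_initial_path delta rho es" "u0 \<in> snd (last es)"
  shows "comp delta rho u0 = snd (last es)"
proof -
  have ne: "es \<noteq> []" using assms(1) by (simp add: is_initial_path_def)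
  have "last es \<in> tree_edges delta rho" using assms(1) ne by (auto simp: is_initial_path_def)
  then obtain u x where "snd (last es) = comp delta rho (u @ [x])" by (auto simp: tree_edges_def)
  then show ?thesis using assms(2) comp_eq by metis
qed

definition good :: "('a \<Rightarrow> 'q \<Rightarrow> 'q) \<Rightarrow> ('q \<Rightarrow> 'a \<Rightarrow> 'a) \<Rightarrow> ('q list set \<times> 'q list set) list \<Rightarrow> 'q list \<Rightarrow> bool" where
  "good delta rho es Y \<longleftrightarrow> length Y \<ge> length es \<and>
     (snd (last es), comp delta rho Y) \<in> (tree_edges delta rho)\<^sup>* \<and>
     (\<forall>W\<in>comp delta rho Y. \<exists>v\<in>snd (last es). suffix v W)"

lemma ext1:
  assumes rev: "\<forall>j. bij (delta j)"
    and ip: "is_initial_path delta rho es"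
    and g: "good delta rho es Y"
    and f: "f \<in> legit_children delta rho (last es)"
  shows "\<exists>c. comp delta rho (drop (length Y - length es) Y @ [c]) = snd f \<and> good delta rho es (Y @ [c])
     \<and> (comp delta rho Y, comp delta rho (Y @ [c])) \<in> jungle delta rho es"
proof -
  let ?D = "snd (last es)"
  let ?n = "length es"
  obtain w where w: "w \<in> ?D" "suffix w Y" using g comp_self unfolding good_def by blast
  have lw: "length w = ?n" using last_len[OF ip w(1)] .
  obtain Y0 where Y0: "Y = Y0 @ w" using w(2) by (auto simp: suffix_def)
  have wd: "w = drop (length Y - ?n) Y" using Y0 lw by simp
  have ft: "f \<in> tree_edges delta rho" "fst f = ?D" "edge_liftable f (last es)"
    using f by (auto simp: legit_children_def)
  obtain u x where fe: "f = (comp delta rho u, comp delta rho (u @ [x]))"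
    using ft(1) by (auto simp: tree_edges_def)
  have "w \<in> comp delta rho u" using fe ft(2) w(1) by simp
  then obtain c where c: "w @ [c] \<in> comp delta rho (u @ [x])" using comp_ext[OF rev] by blast
  have cf: "comp delta rho (w @ [c]) = snd f" using comp_eq[OF c] fe by simp
  have te: "(comp delta rho Y, comp delta rho (Y @ [c])) \<in> tree_edges delta rho"
    unfolding tree_edges_def by blast
  have reach: "(?D, comp delta rho (Y @ [c])) \<in> (tree_edges delta rho)\<^sup>*"
    using g te unfolding good_def by (blast intro: rtrancl_into_rtrancl)
  have words: "\<forall>W\<in>comp delta rho (Y @ [c]). \<exists>v\<in>?D. suffix v W"
  proof
    fix W assume "W \<in> comp delta rho (Y @ [c])"
    then have "W \<in> comp delta rho (Y0 @ (w @ [c]))" using Y0 by simp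
    then obtain W0 S where WS: "W = W0 @ S" "S \<in> comp delta rho (w @ [c])" using comp_split by blast
    then have "S \<in> snd f" using cf by simp
    then obtain v where "v \<in> ?D" "suffix v S" using ft(3) unfolding edge_liftable_def by blast
    then show "\<exists>v\<in>?D. suffix v W" using WS(1) suffix_appendI by blast
  qed
  have gc: "good delta rho es (Y @ [c])" using g reach words unfolding good_def by simp
  have gr: "(?D, fst (comp delta rho Y, comp delta rho (Y @ [c]))) \<in> (tree_edges delta rho)\<^sup>*"
    using g unfolding good_def by simp
  have el: "edge_liftable (comp delta rho Y, comp delta rho (Y @ [c])) (last es)"
    unfolding edge_liftable_def using words by simp
  have jg: "(comp delta rho Y, comp delta rho (Y @ [c])) \<in> jungle delta rho es"
    unfolding jungle_def using te gr el by blast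
  have cf2: "comp delta rho (drop (length Y - length es) Y @ [c]) = snd f" using cf wd by simp
  show ?thesis using cf2 gc jg by blast
qed

lemma iter:
  assumes rev: "\<forall>j. bij (delta j)"
    and ip: "is_initial_path delta rho es"
    and ne: "legit_children delta rho (last es) \<noteq> {}"
  shows "good delta rho es Y \<Longrightarrow> \<exists>R. length R = r \<and> good delta rho es (Y @ R) \<and>
     (\<forall>k. length Y \<le> k \<longrightarrow> k < length Y + r \<longrightarrow>
        (comp delta rho (take k (Y @ R)), comp delta rho (take (Suc k) (Y @ R))) \<in> jungle delta rho es)"
proof (induction r arbitrary: Y)
  case 0
  then show ?case by (rule_tac x="[]" in exI) simp
next
  case (Suc r)
  obtain f where f: "f \<in> legit_children delta rho (last es)" using ne by blast
  obtain c where c: "good delta rho es (Y @ [c])"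
    "(comp delta rho Y, comp delta rho (Y @ [c])) \<in> jungle delta rho es"
    using ext1[OF rev ip Suc.prems f] by blast
  obtain R where R: "length R = r" "good delta rho es ((Y @ [c]) @ R)"
    "\<forall>k. length (Y @ [c]) \<le> k \<longrightarrow> k < length (Y @ [c]) + r \<longrightarrow>
        (comp delta rho (take k ((Y @ [c]) @ R)), comp delta rho (take (Suc k) ((Y @ [c]) @ R))) \<in> jungle delta rho es"
    using Suc.IH[OF c(1)] by blast
  have "\<forall>k. length Y \<le> k \<longrightarrow> k < length Y + Suc r \<longrightarrow>
        (comp delta rho (take k (Y @ c # R)), comp delta rho (take (Suc k) (Y @ c # R))) \<in> jungle delta rho es"
  proof (intro allI impI)
    fix k assume k: "length Y \<le> k" "k < length Y + Suc r"
    show "(comp delta rho (take k (Y @ c # R)), comp delta rho (take (Suc k) (Y @ c # R))) \<in> jungle delta rho es"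
    proof (cases "k = length Y")
      case True
      then show ?thesis using c(2) by simp
    next
      case False
      then have "length (Y @ [c]) \<le> k" "k < length (Y @ [c]) + r" using k by auto
      then show ?thesis using R(3) by simp
    qed
  qed
  then show ?case using R(1,2) by (rule_tac x="c # R" in exI) simp
qed

lemma jw_good:
  assumes ip: "is_initial_path delta rho es"
    and jw: "j_word delta rho (jungle delta rho es) Z"
    and t: "take (length es) Z \<in> snd (last es)"
    and k: "length es \<le> k" "k \<le> length Z"
  shows "good delta rho es (take k Z)"
proof (cases "k = length es")
  case True
  have cd: "comp delta rho (take k Z) = snd (last es)" using last_comp[OF ip] t True by simp
  show ?thesis unfolding good_def using cd k True by (auto intro: suffix_order.refl)
next
  case False
  define k' where "k' = k - 1"
  have kk: "k = Suc k'" "k' < length Z" "length es \<le> k'" using False k by (auto simp: k'_def)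
  let ?e = "(comp delta rho (take k' Z), comp delta rho (take (Suc k') Z))"
  have ej: "?e \<in> jungle delta rho es" using jw kk unfolding j_word_def by blast
  have "take k' Z \<in> fst ?e" using comp_self by simp
  moreover have "length (take k' Z) = k'" using kk by simp
  ultimately have "?e \<notin> set es" using set_es_len[OF ip] kk by fastforce
  then have e2: "?e \<in> tree_edges delta rho" "(snd (last es), fst ?e) \<in> (tree_edges delta rho)\<^sup>*"
    "edge_liftable ?e (last es)" using ej unfolding jungle_def by auto
  have "(snd (last es), comp delta rho (take k Z)) \<in> (tree_edges delta rho)\<^sup>*"
    using e2(1,2) kk(1) by (auto intro: rtrancl_into_rtrancl)
  moreover have "\<forall>W\<in>comp delta rho (take k Z). \<exists>v\<in>snd (last es). suffix v W"
    using e2(3) kk(1) unfolding edge_liftable_def by simp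
  ultimately show ?thesis unfolding good_def using k by simp
qed

lemma suffix_same_len:
  assumes "suffix w Z" "suffix v Z" "length w = length v"
  shows "w = v"
proof -
  obtain p1 where "Z = p1 @ w" using assms(1) unfolding suffix_def by blast
  moreover obtain p2 where "Z = p2 @ v" using assms(2) unfolding suffix_def by blast
  ultimately show ?thesis using assms(3) by (metis append_eq_append_conv)
qed

lemma two_elems:
  assumes "2 \<le> card A" shows "\<exists>a b. a \<in> A \<and> b \<in> A \<and> a \<noteq> b"
proof -
  have fin: "finite A" using assms card.infinite by fastforce
  then have "A \<noteq> {}" using assms by auto
  then obtain a where a: "a \<in> A" by blast
  have "card (A - {a}) = card A - 1" using a fin by simp
  then have "card (A - {a}) \<noteq> 0" using assms by simp
  then have "A - {a} \<noteq> {}" by (metis card.empty)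
  then obtain b where "b \<in> A - {a}" by blast
  then show ?thesis using a by blast
qed

theorem corollary5p16:
  fixes delta :: "'a::finite \<Rightarrow> 'q::finite \<Rightarrow> 'q"
    and rho :: "'q \<Rightarrow> 'a \<Rightarrow> 'a"
    and es :: "('q list set \<times> 'q list set) list"
  assumes "bireversible delta rho"
    and "connected_aut delta"
    and "\<not> (\<exists>b. is_branch delta rho b \<and> active_branch b \<and> self_liftable (branch_edges b))"
    and "jungle_trunk delta rho es"
  shows "\<forall>i \<in> {1..length es}. \<forall>\<gamma> \<in> sim_classes delta rho es. \<forall>u.
           length u = i - 1 \<and> (\<exists>v\<in>\<gamma>. prefix u v) \<longrightarrow>
           card {q. \<exists>v\<in>\<gamma>. prefix (u @ [q]) v} \<ge> 2"
proof (intro ballI allI impI)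
  fix i \<gamma> u
  assume i: "i \<in> {1..length es}" and \<gamma>: "\<gamma> \<in> sim_classes delta rho es"
    and H: "length u = i - 1 \<and> (\<exists>v\<in>\<gamma>. prefix u v)"
  let ?n = "length es"
  let ?D = "snd (last es)"
  let ?J = "jungle delta rho es"
  have rev: "\<forall>j. bij (delta j)" using assms(1) by (simp add: bireversible_def reversible_def)
  have ip: "is_initial_path delta rho es" and c2: "card (legit_children delta rho (last es)) \<ge> 2"
    using assms(4) by (auto simp: jungle_trunk_def)
  obtain u0 where u0: "u0 \<in> stems es" "\<gamma> = {v \<in> stems es. stem_sim delta rho es u0 v}"
    using \<gamma> by (auto simp: sim_classes_def)
  obtain v where v: "v \<in> \<gamma>" "prefix u v" using H by blast
  have vD: "v \<in> ?D" using v(1) u0(2) by (simp add: stems_def)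
  have u0D: "u0 \<in> ?D" using u0(1) by (simp add: stems_def)
  have "stem_sim delta rho es u0 v" using v(1) u0(2) by simp
  then obtain s where jw: "j_word delta rho ?J (u0 @ s @ v)" and idr: "\<forall>t. rho_ww delta rho (u0 @ s) t = t"
    unfolding stem_sim_def by blast
  have lv: "length v = ?n" using last_len[OF ip vD] .
  have lu0: "length u0 = ?n" using last_len[OF ip u0D] .
  define x where "x = u0 @ s"
  have i1: "1 \<le> i" "i \<le> ?n" using i by auto
  have uv: "u = take (i - 1) v" using v(2) H by (auto simp: prefix_def)
  define a where "a = v ! (i - 1)"
  have vsplit: "v = u @ [a] @ drop i v"
    using uv i1 lv unfolding a_def
    by (metis Cons_nth_drop_Suc One_nat_def Suc_pred append_Cons append_Nil append_take_drop_id diff_less le_less_trans less_one not_le)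
  define Y where "Y = x @ u"
  have Zeq: "u0 @ s @ v = Y @ [a] @ drop i v" using vsplit by (simp add: Y_def x_def)
  have lY: "length Y = length x + (i - 1)" using H by (simp add: Y_def)
  have YZ: "Y = take (length Y) (u0 @ s @ v)" using Zeq by simp
  have tn: "take ?n (u0 @ s @ v) = u0" using lu0 by simp
  have gY: "good delta rho es Y"
    using jw_good[OF ip jw, of "length Y"] tn u0D YZ lY lu0 by (simp add: x_def Zeq)
  obtain f1 f2 where f12: "f1 \<in> legit_children delta rho (last es)" "f2 \<in> legit_children delta rho (last es)" "f1 \<noteq> f2"
    using two_elems[OF c2] by blast
  let ?w = "drop (length Y - length es) Y"
  obtain c1 where c1: "comp delta rho (?w @ [c1]) = snd f1" "good delta rho es (Y @ [c1])"
     "(comp delta rho Y, comp delta rho (Y @ [c1])) \<in> ?J"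
    using ext1[OF rev ip gY f12(1)] by blast
  obtain c2 where c2': "comp delta rho (?w @ [c2]) = snd f2" "good delta rho es (Y @ [c2])"
     "(comp delta rho Y, comp delta rho (Y @ [c2])) \<in> ?J"
    using ext1[OF rev ip gY f12(2)] by blast
  have "fst f1 = fst f2" using f12 by (simp add: legit_children_def)
  then have "c1 \<noteq> c2" using c1(1) c2'(1) f12(3) by (metis prod_eqI)
  then obtain c where c: "c \<noteq> a" "good delta rho es (Y @ [c])" "(comp delta rho Y, comp delta rho (Y @ [c])) \<in> ?J"
    using c1 c2' by metis
  have ne: "legit_children delta rho (last es) \<noteq> {}" using f12 by blast
  obtain R where R: "length R = ?n - i" "good delta rho es ((Y @ [c]) @ R)"
    "\<forall>k. length (Y @ [c]) \<le> k \<longrightarrow> k < length (Y @ [c]) + (?n - i) \<longrightarrow>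
        (comp delta rho (take k ((Y @ [c]) @ R)), comp delta rho (take (Suc k) ((Y @ [c]) @ R))) \<in> ?J"
    using iter[OF rev ip ne c(2)] by blast
  define v' where "v' = u @ [c] @ R"
  have lv': "length v' = ?n" using R(1) H i1 by (simp add: v'_def)
  have Z'eq: "u0 @ s @ v' = Y @ [c] @ R" by (simp add: Y_def x_def v'_def)
  have jw': "j_word delta rho ?J (u0 @ s @ v')"
    unfolding j_word_def
  proof (intro allI impI)
    fix k assume k: "k < length (u0 @ s @ v')"
    show "(comp delta rho (take k (u0 @ s @ v')), comp delta rho (take (Suc k) (u0 @ s @ v'))) \<in> ?J"
    proof (cases "k < length Y")
      case True
      have e1: "take k (u0 @ s @ v') = take k (u0 @ s @ v)" "take (Suc k) (u0 @ s @ v') = take (Suc k) (u0 @ s @ v)"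
        using True unfolding Z'eq Zeq by auto
      have "k < length (u0 @ s @ v)" using True Zeq by simp
      then show ?thesis using jw e1 unfolding j_word_def by metis
    next
      case False
      show ?thesis
      proof (cases "k = length Y")
        case True
        then show ?thesis using c(3) unfolding Z'eq by simp
      next
        case False2: False
        have "length (Y @ [c]) \<le> k" "k < length (Y @ [c]) + (?n - i)"
          using False False2 k lv' R(1) lY lu0 i1 by (auto simp: x_def Z'eq)
        then show ?thesis using R(3) unfolding Z'eq by simp
      qed
    qed
  qed
  have "u0 @ s @ v' \<in> comp delta rho (u0 @ s @ v')" by (rule comp_self)
  then obtain w where w: "w \<in> ?D" "suffix w (u0 @ s @ v')" using R(2) Z'eq unfolding good_def by auto
  have "w = v'" using suffix_same_len[OF w(2), of v'] last_len[OF ip w(1)] lv'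
    by (simp add: suffix_def)
  then have v'D: "v' \<in> stems es" using w(1) by (simp add: stems_def)
  have "stem_sim delta rho es u0 v'" unfolding stem_sim_def using jw' idr by blast
  then have v'g: "v' \<in> \<gamma>" using u0(2) v'D by simp
  have "a \<in> {q. \<exists>v\<in>\<gamma>. prefix (u @ [q]) v}" using v(1) vsplit
    by (metis (mono_tags, lifting) append_assoc mem_Collect_eq prefixI)
  moreover have "c \<in> {q. \<exists>v\<in>\<gamma>. prefix (u @ [q]) v}" using v'g unfolding v'_def
    by (metis (mono_tags, lifting) append_assoc mem_Collect_eq prefixI)
  ultimately have "{a, c} \<subseteq> {q. \<exists>v\<in>\<gamma>. prefix (u @ [q]) v}" by blast
  then have "card {a, c} \<le> card {q. \<exists>v\<in>\<gamma>. prefix (u @ [q]) v}" by (rule card_mono[OF finite])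
  then show "card {q. \<exists>v\<in>\<gamma>. prefix (u @ [q]) v} \<ge> 2" using c(1) by simp
qed

end
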